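(* Let $\mathcal{X}$ be a symmetric configuration $v_3$ with strong chromatic number 5, and suppose there is a set $T$ of at most 2 points of $\mathcal{X}$ and an assignment of 4 colours to the points not in $T$ such that no two points not in $T$ lying in a common block receive the same colour. Then $\mathcal{X}$ has weak chromatic number 2 (equivalently, $\mathcal{X}$ has a blocking set).
   Context: A symmetric configuration $v_3$ consists of a set of $v$ points and a collection of $v$ blocks, each block being a 3-element subset of the points, such that every point lies in exactly 3 blocks and any two distinct points lie in at most one common block. A strong colouring is an assignment of colours to points such that the three points of every block receive three distinct colours; the strong chromatic number is the minimum number of colours in a strong colouring. A weak colouring is an assignment of colours to points such that no block is monochromatic; the weak chromatic number is the minimum number of colours in a weak colouring. A blocking set is a subset $Q$ of the points such that every block contains at least one point of $Q$ and at least one point not in $Q$. *)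

theory Defs
  imports Main
begin

definition config_v3 :: "'a set \<Rightarrow> 'a set set \<Rightarrow> bool" where
  "config_v3 P B \<longleftrightarrow> finite P \<and> B \<subseteq> Pow P \<and> card B = card P
     \<and> (\<forall>b\<in>B. card b = 3)
     \<and> (\<forall>x\<in>P. card {b\<in>B. x \<in> b} = 3)
     \<and> (\<forall>x\<in>P. \<forall>y\<in>P. x \<noteq> y \<longrightarrow> card {b\<in>B. x \<in> b \<and> y \<in> b} \<le> 1)"

definition strong_colouring :: "'a set set \<Rightarrow> ('a \<Rightarrow> 'c) \<Rightarrow> bool" where
  "strong_colouring B c \<longleftrightarrow> (\<forall>b\<in>B. inj_on c b)"

definition weak_colouring :: "'a set set \<Rightarrow> ('a \<Rightarrow> 'c) \<Rightarrow> bool" where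
  "weak_colouring B c \<longleftrightarrow> (\<forall>b\<in>B. \<exists>x\<in>b. \<exists>y\<in>b. c x \<noteq> c y)"

definition strong_chromatic_number :: "'a set \<Rightarrow> 'a set set \<Rightarrow> nat" where
  "strong_chromatic_number P B =
     (LEAST k. \<exists>c :: 'a \<Rightarrow> nat. c ` P \<subseteq> {..<k} \<and> strong_colouring B c)"

definition weak_chromatic_number :: "'a set \<Rightarrow> 'a set set \<Rightarrow> nat" where
  "weak_chromatic_number P B =
     (LEAST k. \<exists>c :: 'a \<Rightarrow> nat. c ` P \<subseteq> {..<k} \<and> weak_colouring B c)"

end

theory Submission imports Defs begin
definition side :: "nat \<Rightarrow> nat \<Rightarrow> bool" where "side k n \<longleftrightarrow> n = 0 \<or> n = k"

lemma four_cases: "(a::nat) < 4 \<Longrightarrow> a = 0 \<or> a = 1 \<or> a = 2 \<or> a = 3" by arith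

lemma side3:
  assumes "a<4" "b<4" "d<4" "a\<noteq>b" "b\<noteq>d" "a\<noteq>d" "k=1 \<or> k=2 \<or> k=3"
  shows "side k a \<noteq> side k b \<or> side k b \<noteq> side k d"
  using four_cases[OF assms(1)] four_cases[OF assms(2)] four_cases[OF assms(3)] assms(4-7)
  unfolding side_def by auto

lemma side_unique:
  assumes "a<4" "b<4" "a\<noteq>b" "k=1 \<or> k=2 \<or> k=3" "k'=1 \<or> k'=2 \<or> k'=3"
    "side k a = side k b" "side k' a = side k' b"
  shows "k = k'"
  using four_cases[OF assms(1)] four_cases[OF assms(2)] assms(3-7)
  unfolding side_def by auto

lemma pick_k:
  fixes a b :: "nat \<Rightarrow> nat"
  assumes "a 1 + a 2 + a 3 \<le> 3" "b 1 + b 2 + b 3 \<le> 3"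
    "J \<Longrightarrow> a 1 + a 2 + a 3 \<le> 2" "J \<Longrightarrow> b 1 + b 2 + b 3 \<le> 2"
  shows "\<exists>k. (k=1 \<or> k=2 \<or> k=(3::nat)) \<and> a k \<le> 1 \<and> b k \<le> 1 \<and> (J \<longrightarrow> a k = 0 \<or> b k = 0)"
proof (rule ccontr)
  assume h: "\<not> ?thesis"
  have h1: "\<not> (a 1 \<le> 1 \<and> b 1 \<le> 1 \<and> (J \<longrightarrow> a 1 = 0 \<or> b 1 = 0))" using h by blast
  have h2: "\<not> (a 2 \<le> 1 \<and> b 2 \<le> 1 \<and> (J \<longrightarrow> a 2 = 0 \<or> b 2 = 0))" using h by blast
  have h3: "\<not> (a 3 \<le> 1 \<and> b 3 \<le> 1 \<and> (J \<longrightarrow> a 3 = 0 \<or> b 3 = 0))" using h by blast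
  show False using h1 h2 h3 assms by (cases J) auto
qed

lemma core:
  fixes B :: "'a set set" and c :: "'a \<Rightarrow> nat"
  assumes finP: "finite P" and BP: "B \<subseteq> Pow P" and b3: "\<forall>b\<in>B. card b = 3"
    and deg: "\<forall>x\<in>P. card {b\<in>B. x \<in> b} = 3"
    and pair: "\<forall>x\<in>P. \<forall>y\<in>P. x \<noteq> y \<longrightarrow> card {b\<in>B. x \<in> b \<and> y \<in> b} \<le> 1"
    and t12: "t1 \<in> P" "t2 \<in> P"
    and c4: "\<forall>x\<in>P - {t1,t2}. c x < 4"
    and inj: "\<forall>b\<in>B. \<forall>x\<in>b - {t1,t2}. \<forall>y\<in>b - {t1,t2}. x \<noteq> y \<longrightarrow> c x \<noteq> c y"
  shows "\<exists>w::'a\<Rightarrow>bool. \<forall>b\<in>B. \<exists>x\<in>b. \<exists>y\<in>b. w x \<noteq> w y"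
proof -
  define T where "T = {t1,t2}"
  have finB: "finite B" using finP BP by (meson finite_Pow_iff rev_finite_subset)
  define Ext where "Ext t = {b\<in>B. t\<in>b \<and> b \<inter> T = {t}}" for t
  define G where "G k t = {b\<in>Ext t. \<exists>x\<in>b. \<exists>y\<in>b. x\<noteq>t \<and> y\<noteq>t \<and> x\<noteq>y \<and> side k (c x) = side k (c y)}" for k t
  define F where "F k t = {v. \<exists>b\<in>Ext t. \<exists>x\<in>b. \<exists>y\<in>b. x\<noteq>t \<and> y\<noteq>t \<and> x\<noteq>y \<and> side k (c x) = side k (c y) \<and> v = side k (c x)}" for k t
  define joint where "joint \<longleftrightarrow> t1 \<noteq> t2 \<and> (\<exists>J\<in>B. t1 \<in> J \<and> t2 \<in> J)"
  have finExt: "finite (Ext t)" for t using finB unfolding Ext_def by auto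
  have extpts: "\<exists>x y. b - {t} = {x,y} \<and> x \<noteq> y \<and> x \<in> b \<and> y \<in> b \<and> x \<notin> T \<and> y \<notin> T
       \<and> c x < 4 \<and> c y < 4 \<and> c x \<noteq> c y" if "b \<in> Ext t" for b t
  proof -
    have bB: "b \<in> B" and tb: "t \<in> b" and bT: "b \<inter> T = {t}" using that unfolding Ext_def by auto
    have "card (b - {t}) = 2" using b3 bB tb by (simp add: card_Diff_singleton)
    then obtain x y where xy: "b - {t} = {x,y}" "x \<noteq> y" by (auto simp: card_2_iff)
    have xb: "x \<in> b" "y \<in> b" "x \<noteq> t" "y \<noteq> t" using xy by blast+
    have xT: "x \<notin> T" "y \<notin> T" using bT xb by blast+
    have "b \<subseteq> P" using BP bB by auto
    hence "c x < 4" "c y < 4" using c4 xb xT unfolding T_def by auto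
    moreover have "c x \<noteq> c y" using inj bB xb xT xy(2) unfolding T_def by auto
    ultimately show ?thesis using xy xb xT by blast
  qed
  have pairs_eq: "{x',y'} = b - {t}" if h: "b \<in> Ext t" "x' \<in> b" "y' \<in> b" "x' \<noteq> t" "y' \<noteq> t" "x' \<noteq> y'" for b t x' y'
  proof -
    obtain x y where xy: "b - {t} = {x,y}" "x \<noteq> y" using extpts[OF h(1)] by blast
    have "x' \<in> {x,y}" "y' \<in> {x,y}" using h xy by blast+
    thus ?thesis using xy h(6) by auto
  qed
  have Gsub: "G k t \<subseteq> Ext t" for k t unfolding G_def by auto
  have Gdisj: "G k t \<inter> G k' t = {}" if "k=1 \<or> k=2 \<or> k=3" "k'=1 \<or> k'=2 \<or> k'=3" "k \<noteq> k'" for k k' t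
  proof (rule ccontr)
    assume "G k t \<inter> G k' t \<noteq> {}"
    then obtain b where bk: "b \<in> G k t" and bk': "b \<in> G k' t" by blast
    have be: "b \<in> Ext t" using bk Gsub by auto
    obtain x y where xy: "b - {t} = {x,y}" "x \<noteq> y" "c x < 4" "c y < 4" "c x \<noteq> c y"
      using extpts[OF be] by blast
    obtain x1 y1 where 1: "x1\<in>b" "y1\<in>b" "x1\<noteq>t" "y1\<noteq>t" "x1\<noteq>y1" "side k (c x1) = side k (c y1)"
      using bk unfolding G_def by blast
    obtain x2 y2 where 2: "x2\<in>b" "y2\<in>b" "x2\<noteq>t" "y2\<noteq>t" "x2\<noteq>y2" "side k' (c x2) = side k' (c y2)"
      using bk' unfolding G_def by blast
    have e1: "{x1,y1} = {x,y}" using pairs_eq[OF be 1(1-5)] xy(1) by simp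
    have e2: "{x2,y2} = {x,y}" using pairs_eq[OF be 2(1-5)] xy(1) by simp
    have s1: "side k (c x) = side k (c y)" using e1 1(6) xy(2) by (auto simp: doubleton_eq_iff)
    have s2: "side k' (c x) = side k' (c y)" using e2 2(6) xy(2) by (auto simp: doubleton_eq_iff)
    have "k = k'" using side_unique[OF xy(3,4,5) that(1,2) s1 s2] .
    thus False using that(3) by simp
  qed
  have sumG: "card (G 1 t) + card (G 2 t) + card (G 3 t) \<le> card (Ext t)" for t
  proof -
    have fin: "finite (G k t)" for k using Gsub finExt rev_finite_subset by metis
    have "card (G 1 t) + card (G 2 t) + card (G 3 t) = card (G 1 t \<union> G 2 t \<union> G 3 t)"
      using fin Gdisj[of 1 2 t] Gdisj[of 1 3 t] Gdisj[of 2 3 t]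
      by (simp add: card_Un_disjoint Int_Un_distrib2)
    also have "\<dots> \<le> card (Ext t)" using Gsub finExt by (intro card_mono) auto
    finally show ?thesis .
  qed
  have Ext3: "card (Ext t) \<le> 3" if "t \<in> P" for t
  proof -
    have "Ext t \<subseteq> {b\<in>B. t\<in>b}" unfolding Ext_def by auto
    hence "card (Ext t) \<le> card {b\<in>B. t\<in>b}" using finB by (intro card_mono) auto
    thus ?thesis using deg that by auto
  qed
  have Ext2: "card (Ext t) \<le> 2" if h: "joint" "t = t1 \<or> t = t2" for t
  proof -
    obtain J where J: "J \<in> B" "t1 \<in> J" "t2 \<in> J" "t1 \<noteq> t2" using h(1) unfolding joint_def by blast
    have tP: "t \<in> P" using that(2) t12 by auto
    have "Ext t \<subseteq> {b\<in>B. t\<in>b} - {J}" unfolding Ext_def T_def using J that(2) by auto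
    hence "card (Ext t) \<le> card ({b\<in>B. t\<in>b} - {J})" using finB by (intro card_mono) auto
    also have "\<dots> = 2" using deg tP J that(2) finB by (subst card_Diff_singleton) auto
    finally show ?thesis .
  qed
  obtain k where k: "k=1 \<or> k=2 \<or> k=(3::nat)" "card (G k t1) \<le> 1" "card (G k t2) \<le> 1"
    "joint \<longrightarrow> card (G k t1) = 0 \<or> card (G k t2) = 0"
    using pick_k[of "\<lambda>k. card (G k t1)" "\<lambda>k. card (G k t2)" joint]
      sumG[of t1] sumG[of t2] Ext3[OF t12(1)] Ext3[OF t12(2)] Ext2[of t1] Ext2[of t2]
    by fastforce
  have finG: "finite (G k t)" for t using Gsub finExt rev_finite_subset by metis
  have Fne: "G k t \<noteq> {}" if h: "F k t \<noteq> {}" for t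
  proof -
    obtain b x y where "b \<in> Ext t" "x\<in>b" "y\<in>b" "x\<noteq>t" "y\<noteq>t" "x\<noteq>y" "side k (c x) = side k (c y)"
      using h unfolding F_def by blast
    hence "b \<in> G k t" unfolding G_def by blast
    thus ?thesis by auto
  qed
  have FU: "2 \<le> card (G k t)" if "F k t = UNIV" for t
  proof -
    have "True \<in> F k t" "False \<in> F k t" using that by auto
    then obtain b1 x1 y1 b2 x2 y2 where
      1: "b1 \<in> Ext t" "x1\<in>b1" "y1\<in>b1" "x1\<noteq>t" "y1\<noteq>t" "x1\<noteq>y1" "side k (c x1) = side k (c y1)" "side k (c x1)"
      and 2: "b2 \<in> Ext t" "x2\<in>b2" "y2\<in>b2" "x2\<noteq>t" "y2\<noteq>t" "x2\<noteq>y2" "side k (c x2) = side k (c y2)" "\<not> side k (c x2)"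
      unfolding F_def by blast
    have g: "b1 \<in> G k t" "b2 \<in> G k t" using 1 2 unfolding G_def by blast+
    have "b1 \<noteq> b2"
    proof
      assume eq: "b1 = b2"
      have "{x1,y1} = {x2,y2}" using pairs_eq[OF 1(1-6)] pairs_eq[OF 2(1-6)] eq by simp
      hence "x2 = x1 \<or> x2 = y1" by (auto simp: doubleton_eq_iff)
      thus False using 1(7,8) 2(8) by auto
    qed
    hence "card {b1,b2} = 2" by simp
    moreover have "card {b1,b2} \<le> card (G k t)" using g finG by (intro card_mono) auto
    ultimately show ?thesis by simp
  qed
  have Fok: "F k t \<noteq> UNIV" if "t = t1 \<or> t = t2" for t
    using FU[of t] k(2,3) that by auto
  have Fempty: "joint \<longrightarrow> F k t1 = {} \<or> F k t2 = {}"
    using k(4) Fne finG card_0_eq by blast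
  define w where "w s x = (if x \<in> T then s x else side k (c x))" for s :: "'a \<Rightarrow> bool" and x
  have verify: "\<forall>b\<in>B. \<exists>x\<in>b. \<exists>y\<in>b. w s x \<noteq> w s y"
    if s1: "\<forall>t\<in>T. s t \<notin> F k t"
      and s2: "\<forall>J\<in>B. T \<subseteq> J \<longrightarrow> t1 \<noteq> t2 \<longrightarrow> (\<exists>x\<in>J. \<exists>y\<in>J. w s x \<noteq> w s y)" for s
  proof
    fix b assume bB: "b \<in> B"
    have bP: "b \<subseteq> P" using BP bB by auto
    show "\<exists>x\<in>b. \<exists>y\<in>b. w s x \<noteq> w s y"
    proof (cases "b \<inter> T = {}")
      case True
      obtain x y z where xyz: "b = {x,y,z}" "x\<noteq>y" "y\<noteq>z" "x\<noteq>z" using b3 bB by (auto simp: card_3_iff)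
      have nT: "x \<notin> T" "y \<notin> T" "z \<notin> T" using True xyz by auto
      have c: "c x < 4" "c y < 4" "c z < 4" using c4 nT bP xyz unfolding T_def by auto
      have d: "c x \<noteq> c y" "c y \<noteq> c z" "c x \<noteq> c z" using inj bB nT xyz unfolding T_def by auto
      have "side k (c x) \<noteq> side k (c y) \<or> side k (c y) \<noteq> side k (c z)"
        using side3[OF c d k(1)] .
      thus ?thesis using nT xyz unfolding w_def by auto
    next
      case False
      show ?thesis
      proof (cases "T \<subseteq> b \<and> t1 \<noteq> t2")
        case True
        thus ?thesis using s2 bB by blast
      next
        case False2: False
        obtain t where tT: "t \<in> T" and bt: "b \<inter> T = {t}"
          using False False2 unfolding T_def by auto
        have be: "b \<in> Ext t" using bB bt unfolding Ext_def by auto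
        obtain x y where xy: "b - {t} = {x,y}" "x \<noteq> y" "x \<in> b" "y \<in> b" "x \<notin> T" "y \<notin> T"
          using extpts[OF be] by blast
        have tb: "t \<in> b" using bt by auto
        show ?thesis
        proof (cases "side k (c x) = side k (c y)")
          case True
          have "side k (c x) \<in> F k t" unfolding F_def using be xy True tT by blast
          moreover have "s t \<notin> F k t" using s1 tT by blast
          ultimately have "s t \<noteq> side k (c x)" by (cases "s t"; cases "side k (c x)") auto
          thus ?thesis using tb xy tT unfolding w_def by auto
        next
          case False
          thus ?thesis using xy unfolding w_def by auto
        qed
      qed
    qed
  qed
  have exv: "\<exists>v. v \<notin> F k t" if "t = t1 \<or> t = t2" for t using Fok[OF that] by auto
  have exs: "(SOME v. v \<notin> F k t) \<notin> F k t" if "t = t1 \<or> t = t2" for t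
    using someI_ex[OF exv[OF that]] .
  show ?thesis
  proof (cases joint)
    case False
    define s where "s t = (SOME v. v \<notin> F k t)" for t
    have "\<forall>t\<in>T. s t \<notin> F k t" unfolding s_def T_def using exs[of t1] exs[of t2] by blast
    moreover have "\<forall>J\<in>B. T \<subseteq> J \<longrightarrow> t1 \<noteq> t2 \<longrightarrow> (\<exists>x\<in>J. \<exists>y\<in>J. w s x \<noteq> w s y)"
    proof (intro ballI impI)
      fix J assume "J \<in> B" "T \<subseteq> J" "t1 \<noteq> t2"
      hence "joint" unfolding joint_def T_def by auto
      thus "\<exists>x\<in>J. \<exists>y\<in>J. w s x \<noteq> w s y" using False by blast
    qed
    ultimately have "\<forall>b\<in>B. \<exists>x\<in>b. \<exists>y\<in>b. w s x \<noteq> w s y" by (rule verify)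
    thus ?thesis by (intro exI[of _ "w s"])
  next
    case True
    then obtain J where J: "J \<in> B" "t1 \<in> J" "t2 \<in> J" and t12ne: "t1 \<noteq> t2" unfolding joint_def by blast
    have "card (J - {t1,t2}) = 1" using b3 J t12ne by (simp add: card_Diff_subset)
    then obtain z where z: "J - {t1,t2} = {z}" by (auto simp: card_1_singleton_iff)
    have Juniq: "J' = J" if "J' \<in> B" "t1 \<in> J'" "t2 \<in> J'" for J'
    proof -
      have "card {b\<in>B. t1 \<in> b \<and> t2 \<in> b} \<le> 1" using pair t12 t12ne by auto
      moreover have "finite {b\<in>B. t1 \<in> b \<and> t2 \<in> b}" using finB by auto
      ultimately show ?thesis using J that by (auto simp: card_le_Suc0_iff_eq)
    qed
    define s where "s t = (if t = t1 \<and> F k t1 = {} then \<not> side k (c z)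
       else if t = t2 \<and> F k t1 \<noteq> {} then \<not> side k (c z) else (SOME v. v \<notin> F k t))" for t
    have st1: "s t1 \<notin> F k t1"
      using exs[of t1] t12ne by (cases "F k t1 = {}") (simp_all add: s_def)
    have st2: "s t2 \<notin> F k t2"
    proof (cases "F k t1 = {}")
      case True thus ?thesis using exs[of t2] t12ne by (simp add: s_def)
    next
      case False
      hence "F k t2 = {}" using Fempty \<open>joint\<close> by blast
      thus ?thesis using False t12ne by (simp add: s_def)
    qed
    have "\<forall>t\<in>T. s t \<notin> F k t" unfolding T_def using st1 st2 by blast
    moreover have "\<forall>J'\<in>B. T \<subseteq> J' \<longrightarrow> t1 \<noteq> t2 \<longrightarrow> (\<exists>x\<in>J'. \<exists>y\<in>J'. w s x \<noteq> w s y)"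
    proof (intro ballI impI)
      fix J' assume "J' \<in> B" "T \<subseteq> J'" "t1 \<noteq> t2"
      hence JJ: "J' = J" using Juniq unfolding T_def by auto
      have zJ: "z \<in> J" "z \<notin> T" using z unfolding T_def by auto
      have "s t1 \<noteq> side k (c z) \<or> s t2 \<noteq> side k (c z)"
        using t12ne by (cases "F k t1 = {}") (simp_all add: s_def)
      moreover have "w s t1 = s t1" "w s t2 = s t2" "w s z = side k (c z)"
        using zJ(2) unfolding w_def T_def by simp_all
      moreover have "t1 \<in> J'" "t2 \<in> J'" "z \<in> J'" using JJ J zJ by simp_all
      ultimately show "\<exists>x\<in>J'. \<exists>y\<in>J'. w s x \<noteq> w s y" by metis
    qed
    ultimately have "\<forall>b\<in>B. \<exists>x\<in>b. \<exists>y\<in>b. w s x \<noteq> w s y" by (rule verify)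
    thus ?thesis by (intro exI[of _ "w s"])
  qed
qed

theorem mainTheorem17:
  fixes P :: "'a set" and B :: "'a set set" and T :: "'a set" and c :: "'a \<Rightarrow> nat"
  assumes "config_v3 P B"
    and "strong_chromatic_number P B = 5"
    and "T \<subseteq> P" and "card T \<le> 2"
    and "c ` (P - T) \<subseteq> {..<4}"
    and "\<forall>b\<in>B. \<forall>x\<in>b - T. \<forall>y\<in>b - T. x \<noteq> y \<longrightarrow> c x \<noteq> c y"
  shows "weak_chromatic_number P B = 2"
proof -
  have finP: "finite P" and BP: "B \<subseteq> Pow P" and cardB: "card B = card P"
    and b3: "\<forall>b\<in>B. card b = 3" and deg: "\<forall>x\<in>P. card {b\<in>B. x \<in> b} = 3"
    and pair: "\<forall>x\<in>P. \<forall>y\<in>P. x \<noteq> y \<longrightarrow> card {b\<in>B. x \<in> b \<and> y \<in> b} \<le> 1"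
    using assms(1) unfolding config_v3_def by auto
  have Pne: "P \<noteq> {}"
  proof
    assume P0: "P = {}"
    have "B = {}"
    proof (rule ccontr)
      assume "B \<noteq> {}"
      then obtain b where "b \<in> B" by auto
      hence "b = {}" "card b = 3" using BP P0 b3 by auto
      thus False by simp
    qed
    hence "strong_chromatic_number P B = 0" unfolding strong_chromatic_number_def
      using P0 by (intro Least_eq_0) (simp add: strong_colouring_def)
    thus False using assms(2) by simp
  qed
  have finT: "finite T" using assms(3) finP rev_finite_subset by auto
  obtain t1 t2 where tt: "T \<subseteq> {t1,t2}" "t1 \<in> P" "t2 \<in> P"
  proof -
    have "card T = 0 \<or> card T = 1 \<or> card T = 2" using assms(4) by arith
    moreover
    { assume "card T = 0"
      hence "T = {}" using finT by simp
      moreover obtain p where "p \<in> P" using Pne by auto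
      ultimately have ?thesis using that[of p p] by auto }
    moreover
    { assume "card T = 1"
      then obtain t where "T = {t}" by (auto simp: card_1_singleton_iff)
      hence ?thesis using that[of t t] assms(3) by auto }
    moreover
    { assume "card T = 2"
      then obtain x y where "T = {x,y}" by (auto simp: card_2_iff)
      hence ?thesis using that[of x y] assms(3) by auto }
    ultimately show ?thesis by blast
  qed
  have c4: "\<forall>x\<in>P - {t1,t2}. c x < 4" using assms(5) tt(1) by auto
  have inj: "\<forall>b\<in>B. \<forall>x\<in>b - {t1,t2}. \<forall>y\<in>b - {t1,t2}. x \<noteq> y \<longrightarrow> c x \<noteq> c y"
    using assms(6) tt(1) by blast
  obtain w :: "'a \<Rightarrow> bool" where w: "\<forall>b\<in>B. \<exists>x\<in>b. \<exists>y\<in>b. w x \<noteq> w y"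
    using core[OF finP BP b3 deg pair tt(2,3) c4 inj] by blast
  define c' where "c' x = (if w x then 1 else 0::nat)" for x
  have ex2: "\<exists>c :: 'a \<Rightarrow> nat. c ` P \<subseteq> {..<2} \<and> weak_colouring B c"
  proof (intro exI conjI)
    show "c' ` P \<subseteq> {..<2}" unfolding c'_def by auto
    show "weak_colouring B c'" unfolding weak_colouring_def c'_def using w by fastforce
  qed
  have Bne: "B \<noteq> {}" using cardB Pne finP by auto
  then obtain b0 where b0: "b0 \<in> B" by auto
  have b0P: "b0 \<subseteq> P" using BP b0 by auto
  have b0ne: "b0 \<noteq> {}" using b3 b0 by fastforce
  show ?thesis unfolding weak_chromatic_number_def
  proof (rule Least_equality)
    show "\<exists>c :: 'a \<Rightarrow> nat. c ` P \<subseteq> {..<2} \<and> weak_colouring B c" by (rule ex2)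
  next
    fix k assume "\<exists>c :: 'a \<Rightarrow> nat. c ` P \<subseteq> {..<k} \<and> weak_colouring B c"
    then obtain d :: "'a \<Rightarrow> nat" where d: "d ` P \<subseteq> {..<k}" "weak_colouring B d" by blast
    obtain x y where "x \<in> b0" "y \<in> b0" "d x \<noteq> d y" using d(2) b0 unfolding weak_colouring_def by blast
    hence "d x < k" "d y < k" using d(1) b0P by auto
    with \<open>d x \<noteq> d y\<close> show "2 \<le> k" by arith
  qed
qed
end
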